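(* Assume $h_1=0$. Let $\nu$ range over Borel probability measures on $D$. Then $$\min_{\nu}\frac{\big(\int_D h_0\mu\,\nu(d\mu\,d\sigma)\big)^2}{\int_D(\mu^2+\sigma^2)\,\nu(d\mu\,d\sigma)}=\begin{cases}\dfrac{h_0^2\mu_-^2}{\mu_-^2+\sigma_+^2},&\text{if } \mu_+\mu_--2\sigma_+^2\le\mu_-^2,\\[2mm] \dfrac{\mu_+\mu_--\sigma_+^2}{\mu_M^2}\,h_0^2,&\text{if } \mu_-^2<\mu_+\mu_--2\sigma_+^2.\end{cases}$$ The unique minimizer $\pi^*$ of $\pi\mapsto\max_{(\mu,\sigma)\in D}F(\pi,\mu,\sigma)$ is $$\pi^*=\begin{cases}\dfrac{h_0\mu_-}{\mu_-^2+\sigma_+^2},&\text{if } \mu_+\mu_--2\sigma_+^2\le\mu_-^2,\\[2mm] \dfrac{h_0}{\mu_M},&\text{if } \mu_-^2<\mu_+\mu_--2\sigma_+^2.\end{cases}$$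
   Context: Let $0<\mu_-<\mu_+$ and $0<\sigma_-<\sigma_+$ be real numbers, $D=[\mu_-,\mu_+]\times[\sigma_-,\sigma_+]$, and $h_0,h_1\in\mathbb R$. For $\pi\in\mathbb R$ and $(\mu,\sigma)\in D$ put $F(\pi,\mu,\sigma)=(h_0-\pi\mu)^2+(h_1-\pi\sigma)^2$. Write $\mu_M=(\mu_++\mu_-)/2$. *)

theory Defs
  imports "HOL-Probability.Probability"
begin

definition Dom :: "real \<Rightarrow> real \<Rightarrow> real \<Rightarrow> real \<Rightarrow> (real \<times> real) set" where
  "Dom mu_m mu_p s_m s_p = {mu_m..mu_p} \<times> {s_m..s_p}"

definition F :: "real \<Rightarrow> real \<Rightarrow> real \<Rightarrow> real \<Rightarrow> real \<Rightarrow> real" where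
  "F h0 h1 \<pi> \<mu> \<sigma> = (h0 - \<pi> * \<mu>)\<^sup>2 + (h1 - \<pi> * \<sigma>)\<^sup>2"

text \<open>Worst case value pi |-> max over D of F(pi,mu,sigma) (D is compact, F continuous,
  so the supremum is a maximum).\<close>
definition worst :: "real \<Rightarrow> real \<Rightarrow> (real \<times> real) set \<Rightarrow> real \<Rightarrow> real" where
  "worst h0 h1 D \<pi> = (SUP p\<in>D. F h0 h1 \<pi> (fst p) (snd p))"

definition probs_on :: "(real \<times> real) set \<Rightarrow> (real \<times> real) measure set" where
  "probs_on D = {\<nu>. prob_space \<nu> \<and> sets \<nu> = sets (restrict_space borel D)}"

definition ratio :: "real \<Rightarrow> (real \<times> real) measure \<Rightarrow> real" where
  "ratio h0 \<nu> = (\<integral>p. h0 * fst p \<partial>\<nu>)\<^sup>2 / (\<integral>p. (fst p)\<^sup>2 + (snd p)\<^sup>2 \<partial>\<nu>)"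

end

theory Submission
  imports Defs
begin




lemma alg1:
  fixes a b t m :: real
  assumes "0<a" "a<b" "a \<le> m" "a*b - 2*t^2 \<le> a^2"
  shows "a^2/(a^2+t^2) \<le> m^2/((a+b)*m - a*b + t^2)"
proof -
  have X: "a^2+t^2 > 0" using assms by (simp add: add_pos_nonneg)
  have "(a+b)*m - a*b \<ge> a^2"
  proof -
    have "(a+b)*m \<ge> (a+b)*a" using assms by (intro mult_left_mono) auto
    thus ?thesis by (simp add: power2_eq_square algebra_simps)
  qed
  hence L: "(a+b)*m - a*b + t^2 > 0" using assms by (smt (verit) zero_le_power2 zero_less_power)
  have f1: "(a^2+t^2)*m \<ge> (a^2+t^2)*a" using X assms by (intro mult_left_mono) auto
  have "(a^2+t^2)*m - a^2*b + a*t^2 \<ge> 0"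
  proof -
    have "(a^2+t^2)*a - a^2*b + a*t^2 = a*(a^2+2*t^2-a*b)" by (simp add: power2_eq_square algebra_simps)
    also have "\<dots> \<ge> 0" using assms by (intro mult_nonneg_nonneg) auto
    finally show ?thesis using f1 by linarith
  qed
  hence "(m-a)*((a^2+t^2)*m - a^2*b + a*t^2) \<ge> 0" using assms by simp
  moreover have "(m-a)*((a^2+t^2)*m - a^2*b + a*t^2) = m^2*(a^2+t^2) - a^2*((a+b)*m - a*b + t^2)"
    by (simp add: power2_eq_square algebra_simps)
  ultimately have "a^2*((a+b)*m - a*b + t^2) \<le> m^2*(a^2+t^2)" by linarith
  thus ?thesis using X L by (simp add: divide_simps)
qed

lemma alg2:
  fixes c d m :: real
  assumes "c > 0" "c*m - d > 0"
  shows "4*d/c^2 \<le> m^2/(c*m - d)"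
proof -
  have "0 \<le> (c*m - 2*d)^2" by simp
  also have "(c*m - 2*d)^2 = m^2*c^2 - 4*d*(c*m-d)" by (simp add: power2_eq_square algebra_simps)
  finally have "4*d*(c*m-d) \<le> m^2*c^2" by linarith
  thus ?thesis using assms by (simp add: divide_simps mult.commute)
qed


lemma between_sq:
  fixes x u v :: real
  assumes "min u v \<le> x" "x \<le> max u v"
  shows "x^2 \<le> max (u^2) (v^2)"
proof -
  have "\<bar>x\<bar> \<le> \<bar>u\<bar> \<or> \<bar>x\<bar> \<le> \<bar>v\<bar>" using assms by linarith
  hence "\<bar>x\<bar>^2 \<le> \<bar>u\<bar>^2 \<or> \<bar>x\<bar>^2 \<le> \<bar>v\<bar>^2"
    by (metis abs_ge_zero power_mono)
  thus ?thesis by (simp only: power2_abs) linarith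
qed

lemma worst_eq:
  fixes a b sm sp h0 p :: real
  assumes "0<a" "a<b" "0<sm" "sm<sp"
  shows "worst h0 0 (Dom a b sm sp) p = max ((h0-p*a)^2) ((h0-p*b)^2) + p^2 * sp^2"
  unfolding worst_def
proof (rule cSup_eq_maximum)
  let ?W = "max ((h0-p*a)^2) ((h0-p*b)^2) + p^2 * sp^2"
  show "?W \<in> (\<lambda>q. F h0 0 p (fst q) (snd q)) ` Dom a b sm sp"
  proof (cases "(h0-p*b)^2 \<le> (h0-p*a)^2")
    case True
    hence "?W = F h0 0 p (fst (a,sp)) (snd (a,sp))" by (simp add: F_def power_mult_distrib)
    moreover have "(a,sp) \<in> Dom a b sm sp" using assms by (simp add: Dom_def)
    ultimately show ?thesis by blast
  next
    case False
    hence "?W = F h0 0 p (fst (b,sp)) (snd (b,sp))" by (simp add: F_def power_mult_distrib)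
    moreover have "(b,sp) \<in> Dom a b sm sp" using assms by (simp add: Dom_def)
    ultimately show ?thesis by blast
  qed
  fix y assume "y \<in> (\<lambda>q. F h0 0 p (fst q) (snd q)) ` Dom a b sm sp"
  then obtain mu sg where q: "a \<le> mu" "mu \<le> b" "sm \<le> sg" "sg \<le> sp" and y: "y = F h0 0 p mu sg"
    by (auto simp: Dom_def)
  have "min (h0-p*a) (h0-p*b) \<le> h0-p*mu \<and> h0-p*mu \<le> max (h0-p*a) (h0-p*b)"
  proof (cases "p \<ge> 0")
    case True
    have "p*a \<le> p*mu" "p*mu \<le> p*b" using True q by (auto intro: mult_left_mono)
    thus ?thesis by linarith
  next
    case False
    have "p*mu \<le> p*a" "p*b \<le> p*mu" using False q by (auto intro: mult_left_mono_neg)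
    thus ?thesis by linarith
  qed
  hence 1: "(h0-p*mu)^2 \<le> max ((h0-p*a)^2) ((h0-p*b)^2)" using between_sq by blast
  have "sg^2 \<le> sp^2" using q assms by (intro power_mono) auto
  hence "p^2 * sg^2 \<le> p^2 * sp^2" by (intro mult_left_mono) auto
  thus "y \<le> ?W" using 1 y by (simp add: F_def power_mult_distrib)
qed


lemma ratio_lower:
  fixes a b sm sp h0 :: real and nu :: "(real \<times> real) measure"
  assumes "0<a" "a<b" "0<sm" "sm<sp" "nu \<in> probs_on (Dom a b sm sp)"
  shows "\<exists>m. a \<le> m \<and> m \<le> b \<and> h0^2 * (m^2 / ((a+b)*m - a*b + sp^2)) \<le> ratio h0 nu"
proof -
  let ?D = "Dom a b sm sp"
  interpret P: prob_space nu using assms(5) by (simp add: probs_on_def)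
  have sets: "sets nu = sets (restrict_space borel ?D)" using assms(5) by (simp add: probs_on_def)
  have sp: "space nu = ?D" using sets_eq_imp_space_eq[OF sets] by (simp add: space_restrict_space)
  have meas: "f \<in> borel_measurable nu" if "f \<in> borel_measurable borel" for f :: "real \<times> real \<Rightarrow> real"
  proof -
    have "f \<in> borel_measurable (restrict_space borel ?D)"
      using that by (rule measurable_restrict_space1)
    thus ?thesis using measurable_cong_sets[OF sets refl] by blast
  qed
  have bnd: "x \<in> space nu \<Longrightarrow> a \<le> fst x \<and> fst x \<le> b \<and> sm \<le> snd x \<and> snd x \<le> sp" for x
    using sp by (auto simp: Dom_def)
  have sq1: "a^2 \<le> (fst x)^2" "(snd x)^2 \<le> sp^2" if "x \<in> space nu" for x
  proof -
    from bnd[OF that] have "a \<le> fst x" "snd x \<le> sp" "sm \<le> snd x" by auto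
    thus "a^2 \<le> (fst x)^2" "(snd x)^2 \<le> sp^2" using assms by (auto intro!: power_mono)
  qed
  have int: "integrable nu f" if "f \<in> borel_measurable borel" "\<And>x. x \<in> space nu \<Longrightarrow> \<bar>f x\<bar> \<le> B" for f :: "real \<times> real \<Rightarrow> real" and B :: real
    using that by (intro P.integrable_const_bound[where B=B] AE_I2 meas) auto
  have i1: "integrable nu fst"
  proof (rule int[of _ b])
    fix x assume "x \<in> space nu" with bnd assms have "a \<le> fst x" "fst x \<le> b" by auto
    thus "\<bar>fst x\<bar> \<le> b" using assms by simp
  qed (intro borel_measurable_continuous_onI continuous_intros)
  have i2: "integrable nu (\<lambda>x. (fst x)^2)"
  proof (rule int[of _ "b^2"])
    fix x assume "x \<in> space nu" with bnd assms have "a \<le> fst x" "fst x \<le> b" by auto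
    thus "\<bar>(fst x)^2\<bar> \<le> b^2" using assms by (simp add: power_mono)
  qed (intro borel_measurable_continuous_onI continuous_intros)
  have i3: "integrable nu (\<lambda>x. (snd x)^2)"
  proof (rule int[of _ "sp^2"])
    fix x assume "x \<in> space nu" with bnd assms have "sm \<le> snd x" "snd x \<le> sp" by auto
    thus "\<bar>(snd x)^2\<bar> \<le> sp^2" using assms by (simp add: power_mono)
  qed (intro borel_measurable_continuous_onI continuous_intros)
  define m where "m = (\<integral>x. fst x \<partial>nu)"
  define Q where "Q = (\<integral>x. (fst x)^2 \<partial>nu)"
  define S where "S = (\<integral>x. (snd x)^2 \<partial>nu)"
  have ma: "a \<le> m"
  proof -
    have "(\<integral>x. a \<partial>nu) \<le> m" unfolding m_def by (rule integral_mono) (use i1 bnd in auto)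
    thus ?thesis by (simp add: P.prob_space)
  qed
  have mb: "m \<le> b"
  proof -
    have "m \<le> (\<integral>x. b \<partial>nu)" unfolding m_def by (rule integral_mono) (use i1 bnd in auto)
    thus ?thesis by (simp add: P.prob_space)
  qed
  have Qa: "a^2 \<le> Q"
  proof -
    have "(\<integral>x. a^2 \<partial>nu) \<le> Q" unfolding Q_def
      by (rule integral_mono) (use i2 sq1 in auto)
    thus ?thesis by (simp add: P.prob_space)
  qed
  have S0: "0 \<le> S" unfolding S_def by (intro integral_nonneg_AE AE_I2) auto
  have Sb: "S \<le> sp^2"
  proof -
    have "S \<le> (\<integral>x. sp^2 \<partial>nu)" unfolding S_def
      by (rule integral_mono) (use i3 sq1 in auto)
    thus ?thesis by (simp add: P.prob_space)
  qed
  have Qb: "Q \<le> (a+b)*m - a*b"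
  proof -
    have "Q \<le> (\<integral>x. (a+b) * fst x - a*b \<partial>nu)" unfolding Q_def
    proof (rule integral_mono)
      show "integrable nu (\<lambda>x. (a+b) * fst x - a*b)" using i1 by auto
      fix x assume "x \<in> space nu"
      with bnd have "0 \<le> (fst x - a) * (b - fst x)" by auto
      thus "(fst x)^2 \<le> (a+b) * fst x - a*b" by (simp add: power2_eq_square algebra_simps)
    qed (rule i2)
    also have "\<dots> = (a+b)*m - a*b" unfolding m_def using i1 by (simp add: P.prob_space)
    finally show ?thesis .
  qed
  have den: "(\<integral>x. (fst x)^2 + (snd x)^2 \<partial>nu) = Q + S"
    unfolding Q_def S_def using i2 i3 by simp
  have num: "(\<integral>x. h0 * fst x \<partial>nu) = h0 * m" unfolding m_def by simp
  have pos: "0 < Q + S" using Qa S0 assms by (smt (verit) zero_less_power)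
  have "(h0*m)^2 / ((a+b)*m - a*b + sp^2) \<le> (h0*m)^2 / (Q + S)"
    by (rule divide_left_mono) (use Qb Sb pos in \<open>auto intro: mult_pos_pos\<close>)
  hence "h0^2 * (m^2 / ((a+b)*m - a*b + sp^2)) \<le> ratio h0 nu"
    unfolding ratio_def den num by (simp add: power_mult_distrib)
  thus ?thesis using ma mb by blast
qed


lemma two_point:
  fixes a b sm sp h0 p :: real
  assumes "0<a" "a<b" "0<sm" "sm<sp" "0 \<le> p" "p \<le> 1"
  defines "nu \<equiv> distr (measure_pmf (bernoulli_pmf p)) (restrict_space borel (Dom a b sm sp))
                  (\<lambda>c. if c then (b,sp) else (a,sp))"
  shows "nu \<in> probs_on (Dom a b sm sp)"
    and "ratio h0 nu = (h0 * (p*b + (1-p)*a))^2 / (p*(b^2+sp^2) + (1-p)*(a^2+sp^2))"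
proof -
  let ?D = "Dom a b sm sp"
  let ?g = "\<lambda>c. if c then (b,sp) else (a,sp)"
  have gm: "?g \<in> measurable (measure_pmf (bernoulli_pmf p)) (restrict_space borel ?D)"
    using assms by (auto simp: space_restrict_space Dom_def)
  have "prob_space nu" unfolding nu_def
    by (rule prob_space.prob_space_distr[OF prob_space_measure_pmf gm])
  thus "nu \<in> probs_on ?D" unfolding probs_on_def nu_def by simp
  have m: "f \<in> borel_measurable (restrict_space borel ?D)" if "continuous_on UNIV f" for f :: "real \<times> real \<Rightarrow> real"
    by (rule measurable_restrict_space1) (rule borel_measurable_continuous_onI[OF that])
  have e1: "(\<integral>x. h0 * fst x \<partial>nu) = h0 * (p*b + (1-p)*a)" unfolding nu_def
    by (subst integral_distr[OF gm m]) (auto intro!: continuous_intros simp: assms algebra_simps)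
  have e2: "(\<integral>x. (fst x)^2 + (snd x)^2 \<partial>nu) = p*(b^2+sp^2) + (1-p)*(a^2+sp^2)" unfolding nu_def
    by (subst integral_distr[OF gm m]) (auto intro!: continuous_intros simp: assms algebra_simps)
  show "ratio h0 nu = (h0 * (p*b + (1-p)*a))^2 / (p*(b^2+sp^2) + (1-p)*(a^2+sp^2))"
    unfolding ratio_def e1 e2 ..
qed


lemma case1_worst:
  fixes a b sp h0 p q :: real
  assumes "0<a" "a<b" "0<sp" "a*b - 2 * sp^2 \<le> a^2"
    and q: "q = h0*a/(a^2+sp^2)" and "p \<noteq> q"
  shows "max ((h0-q*a)^2) ((h0-q*b)^2) + q^2 * sp^2 < max ((h0-p*a)^2) ((h0-p*b)^2) + p^2 * sp^2"
proof -
  define X where "X = a^2+sp^2"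
  have X: "X > 0" unfolding X_def using assms by (simp add: add_pos_pos)
  have Xq: "X*q = h0*a" unfolding q X_def[symmetric] using X by simp
  have e1: "h0 - q*a = h0 * sp^2/X"
  proof -
    have "(h0 - q*a)*X = h0*X - a*(X*q)" by (simp add: algebra_simps)
    also have "\<dots> = h0*X - a*(h0*a)" using Xq by simp
    also have "\<dots> = h0 * sp^2" unfolding X_def by (simp add: algebra_simps power2_eq_square)
    finally have "h0 * sp^2 = (h0 - q*a)*X" ..
    thus ?thesis using X by (simp add: field_simps)
  qed
  have e2: "h0 - q*b = h0*(X-a*b)/X"
  proof -
    have "(h0 - q*b)*X = h0*X - b*(X*q)" by (simp add: algebra_simps)
    also have "\<dots> = h0*X - b*(h0*a)" using Xq by simp
    also have "\<dots> = h0*(X-a*b)" by (simp add: algebra_simps)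
    finally show ?thesis using X by (simp add: field_simps)
  qed
  have "\<bar>X-a*b\<bar> \<le> \<bar>sp^2\<bar>"
  proof -
    have "a*a \<le> a*b" using assms by (intro mult_left_mono) auto
    thus ?thesis using assms unfolding X_def by (simp add: power2_eq_square abs_le_iff)
  qed
  hence "(X-a*b)^2 \<le> (sp^2)^2" by (simp only: abs_le_square_iff)
  hence "h0^2*(X-a*b)^2/X^2 \<le> h0^2*(sp^2)^2/X^2"
    by (intro divide_right_mono mult_left_mono) auto
  hence dom: "(h0-q*b)^2 \<le> (h0-q*a)^2" unfolding e1 e2 by (simp add: power_mult_distrib power_divide)
  have "(h0-p*a)^2 + p^2 * sp^2 - ((h0-q*a)^2 + q^2 * sp^2 + X*(p-q)^2) = 2*(p-q)*(X*q - h0*a)"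
    unfolding X_def by (simp add: algebra_simps power2_eq_square)
  hence key: "(h0-p*a)^2 + p^2 * sp^2 = (h0-q*a)^2 + q^2 * sp^2 + X*(p-q)^2" using Xq by simp
  have "X*(p-q)^2 > 0" using X assms by simp
  thus ?thesis using dom key by (smt (verit) max.cobounded1 max_def)
qed

lemma case2_worst:
  fixes a b sp h0 p q :: real
  assumes "0<a" "a<b" "0<sp" "a^2 < a*b - 2 * sp^2"
    and q: "q = h0/((a+b)/2)" and "p \<noteq> q"
  shows "max ((h0-q*a)^2) ((h0-q*b)^2) + q^2 * sp^2 < max ((h0-p*a)^2) ((h0-p*b)^2) + p^2 * sp^2"
proof -
  define c where "c = a+b"
  have c: "c > 0" using assms unfolding c_def by simp
  have q2: "q = 2*h0/c" unfolding q c_def by simp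
  define u where "u = h0 - q*a"
  define t where "t = p - q"
  have t: "t \<noteq> 0" using assms unfolding t_def by simp
  have u: "u = h0*(b-a)/c" unfolding u_def q2 using c by (simp add: field_simps c_def)
  have v: "h0 - q*b = - u" unfolding u q2 using c by (simp add: field_simps c_def)
  have G: "max ((h0-q*a)^2) ((h0-q*b)^2) + q^2 * sp^2 = u^2 + q^2 * sp^2"
  proof -
    have "(h0-q*b)^2 = u^2" using v by simp
    thus ?thesis unfolding u_def by simp
  qed
  have ga: "(h0-p*a)^2 + p^2 * sp^2 = u^2 + q^2 * sp^2 + t*(2*(q * sp^2 - a*u)) + (a^2+sp^2)*t^2"
    unfolding u_def t_def by (simp add: algebra_simps power2_eq_square)
  have gb: "(h0-p*b)^2 + p^2 * sp^2 = u^2 + q^2 * sp^2 + t*(2*(q * sp^2 + b*u)) + (b^2+sp^2)*t^2"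
  proof -
    have "(h0-p*b)^2 + p^2 * sp^2 = (h0-q*b)^2 + q^2 * sp^2 + t*(2*(q * sp^2 - b*(h0-q*b))) + (b^2+sp^2)*t^2"
      unfolding t_def by (simp add: algebra_simps power2_eq_square)
    thus ?thesis using v by simp
  qed
  define al where "al = 2*(2 * sp^2 - a*(b-a))/c"
  define be where "be = 2*(2 * sp^2 + b*(b-a))/c"
  have A: "2*(q * sp^2 - a*u) = h0*al" unfolding al_def u q2 using c by (simp add: field_simps)
  have B: "2*(q * sp^2 + b*u) = h0*be" unfolding be_def u q2 using c by (simp add: field_simps)
  have al: "al < 0" unfolding al_def using c assms by (simp add: divide_neg_pos algebra_simps power2_eq_square)
  have be: "be > 0" unfolding be_def using c assms by (intro divide_pos_pos) (auto intro!: add_pos_nonneg mult_nonneg_nonneg)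
  have t2: "t^2 > 0" using t by simp
  show ?thesis
  proof (cases "h0*t > 0")
    case True
    have "t*(h0*be) = (h0*t)*be" by simp
    also have "\<dots> > 0" using True be by simp
    finally have "0 < t*(2*(q * sp^2 + b*u))" using B by simp
    moreover have "(b^2+sp^2)*t^2 > 0" using t2 assms by (intro mult_pos_pos) (auto simp: add_pos_pos)
    ultimately have "u^2 + q^2 * sp^2 < (h0-p*b)^2 + p^2 * sp^2" using gb by linarith
    thus ?thesis using G by (smt (verit) max.cobounded2)
  next
    case False
    have "t*(h0*al) = (h0*t)*al" by simp
    also have "\<dots> \<ge> 0" using False al by (simp add: mult_nonpos_nonpos)
    finally have "0 \<le> t*(2*(q * sp^2 - a*u))" using A by simp
    moreover have "(a^2+sp^2)*t^2 > 0" using t2 assms by (intro mult_pos_pos) (auto simp: add_pos_pos)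
    ultimately have "u^2 + q^2 * sp^2 < (h0-p*a)^2 + p^2 * sp^2" using ga by linarith
    thus ?thesis using G by (smt (verit) max.cobounded1)
  qed
qed




theorem mainTheorem8:
  fixes mu_m mu_p s_m s_p h0 h1 :: real
  assumes "0 < mu_m" "mu_m < mu_p" "0 < s_m" "s_m < s_p"
    and "h1 = 0"
  defines "D \<equiv> Dom mu_m mu_p s_m s_p"
    and "V \<equiv> (if mu_p * mu_m - 2 * s_p\<^sup>2 \<le> mu_m\<^sup>2
              then h0\<^sup>2 * mu_m\<^sup>2 / (mu_m\<^sup>2 + s_p\<^sup>2)
              else (mu_p * mu_m - s_p\<^sup>2) / ((mu_p + mu_m) / 2)\<^sup>2 * h0\<^sup>2)"
    and "\<pi>s \<equiv> (if mu_p * mu_m - 2 * s_p\<^sup>2 \<le> mu_m\<^sup>2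
              then h0 * mu_m / (mu_m\<^sup>2 + s_p\<^sup>2)
              else h0 / ((mu_p + mu_m) / 2))"
  shows "(\<forall>\<nu>\<in>probs_on D. V \<le> ratio h0 \<nu>) \<and> (\<exists>\<nu>\<in>probs_on D. ratio h0 \<nu> = V)
       \<and> (\<forall>\<pi>. worst h0 h1 D \<pi>s \<le> worst h0 h1 D \<pi>)
       \<and> (\<forall>\<pi>. worst h0 h1 D \<pi> = worst h0 h1 D \<pi>s \<longrightarrow> \<pi> = \<pi>s)"
  proof -
  let ?a = mu_m and ?b = mu_p and ?s = s_p
  note A = assms(1-4)
  have W: "worst h0 h1 D p = max ((h0-p*mu_m)^2) ((h0-p*mu_p)^2) + p^2 * s_p^2" for p
    unfolding D_def assms(5) by (rule worst_eq[OF A])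
  have strict: "worst h0 h1 D \<pi>s < worst h0 h1 D p" if "p \<noteq> \<pi>s" for p
  proof (cases "mu_p * mu_m - 2 * s_p\<^sup>2 \<le> mu_m\<^sup>2")
    case True
    hence q: "\<pi>s = h0*mu_m/(mu_m^2+s_p^2)" unfolding \<pi>s_def by simp
    show ?thesis unfolding W
      by (rule case1_worst[OF A(1,2) _ _ q that]) (use A True in \<open>auto simp: mult.commute\<close>)
  next
    case False
    hence q: "\<pi>s = h0/((mu_p+mu_m)/2)" unfolding \<pi>s_def by simp
    show ?thesis unfolding W
      by (rule case2_worst[OF A(1,2) _ _ _ that]) (use A False q in \<open>auto simp: mult.commute add.commute\<close>)
  qed
  have P1: "V \<le> ratio h0 \<nu>" if nu: "\<nu> \<in> probs_on D" for \<nu>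
  proof -
    obtain m where m: "mu_m \<le> m" "m \<le> mu_p"
      and r: "h0^2 * (m^2 / ((mu_m+mu_p)*m - mu_m*mu_p + s_p^2)) \<le> ratio h0 \<nu>"
      using ratio_lower[OF A, of \<nu> h0] nu unfolding D_def by blast
    show ?thesis
    proof (cases "mu_p * mu_m - 2 * s_p\<^sup>2 \<le> mu_m\<^sup>2")
      case True
      hence "V = h0^2 * (mu_m^2/(mu_m^2+s_p^2))" unfolding V_def by simp
      also have "\<dots> \<le> h0^2 * (m^2 / ((mu_m+mu_p)*m - mu_m*mu_p + s_p^2))"
        by (intro mult_left_mono alg1) (use A m True in \<open>auto simp: mult.commute\<close>)
      finally show ?thesis using r by linarith
    next
      case False
      define c where "c = mu_m + mu_p"
      define d where "d = mu_m*mu_p - s_p^2"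
      have c: "c > 0" using A unfolding c_def by simp
      have "c*m \<ge> c*mu_m" using c m by simp
      hence cm: "c*m - d > 0" using A unfolding c_def d_def by (simp add: algebra_simps power2_eq_square) (smt (verit) mult_pos_pos)
      have "V = h0^2 * (4*d/c^2)" using False unfolding V_def c_def d_def
        by (simp add: power_divide algebra_simps)
      also have "\<dots> \<le> h0^2 * (m^2/(c*m - d))" by (intro mult_left_mono alg2 c cm) simp
      also have "c*m - d = (mu_m+mu_p)*m - mu_m*mu_p + s_p^2" unfolding c_def d_def by simp
      finally show ?thesis using r by linarith
    qed
  qed
  have P2: "\<exists>\<nu>\<in>probs_on D. ratio h0 \<nu> = V"
  proof (cases "mu_p * mu_m - 2 * s_p\<^sup>2 \<le> mu_m\<^sup>2")
    case True
    note tp = two_point[OF A, of 0, simplified]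
    obtain nu where nu: "nu \<in> probs_on D" "ratio h0 nu = (h0 * mu_m)^2 / (mu_m^2 + s_p^2)"
      using tp unfolding D_def by blast
    have "ratio h0 nu = V" unfolding nu(2) V_def using True by (simp add: power_mult_distrib)
    thus ?thesis using nu(1) by blast
  next
    case False
    define c where "c = mu_m + mu_p"
    define d where "d = mu_m*mu_p - s_p^2"
    define m0 where "m0 = 2*d/c"
    define p where "p = (m0 - mu_m)/(mu_p - mu_m)"
    have c: "c > 0" using A unfolding c_def by simp
    have d: "d > 0"
    proof -
      have "mu_m^2 > 0" "s_p^2 \<ge> 0" using A by auto
      moreover have "mu_p*mu_m = mu_m*mu_p" by simp
      ultimately show ?thesis using False unfolding d_def by linarith
    qed
    have "2*d > mu_m*c" using False unfolding c_def d_def by (simp add: algebra_simps power2_eq_square)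
    hence m0a: "mu_m < m0" unfolding m0_def using c by (simp add: field_simps)
    have "mu_m*mu_p \<le> mu_p*mu_p" using A by (intro mult_right_mono) auto
    moreover have "mu_p*c = mu_m*mu_p + mu_p*mu_p" unfolding c_def by (simp add: algebra_simps)
    moreover have "s_p^2 \<ge> 0" by simp
    ultimately have "2*d \<le> mu_p*c" unfolding d_def by argo
    hence m0b: "m0 \<le> mu_p" unfolding m0_def using c by (simp add: field_simps)
    have p0: "0 \<le> p" "p \<le> 1" unfolding p_def using m0a m0b A by auto
    note tp = two_point[OF A p0]
    have mp: "p*mu_p + (1-p)*mu_m = m0"
    proof -
      have "p*(mu_p-mu_m) = m0 - mu_m" unfolding p_def using A by simp
      moreover have "p*mu_p + (1-p)*mu_m = mu_m + p*(mu_p-mu_m)" by (simp add: algebra_simps)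
      ultimately show ?thesis by simp
    qed
    have dp: "p*(mu_p^2+s_p^2) + (1-p)*(mu_m^2+s_p^2) = d"
    proof -
      have "p*(mu_p^2+s_p^2) + (1-p)*(mu_m^2+s_p^2) = (p*mu_p + (1-p)*mu_m - mu_m)*(mu_p+mu_m) + mu_m^2 + s_p^2"
        by (simp add: algebra_simps power2_eq_square)
      also have "\<dots> = c*m0 - mu_m*mu_p + s_p^2" unfolding mp c_def by (simp add: algebra_simps power2_eq_square)
      also have "c*m0 = 2*d" unfolding m0_def using c by simp
      finally show ?thesis unfolding d_def by simp
    qed
    obtain nu where nu: "nu \<in> probs_on D" "ratio h0 nu = (h0*m0)^2/d"
      using tp unfolding D_def mp dp by blast
    have "ratio h0 nu = (h0*m0)^2/d" by (rule nu(2))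
    also have "\<dots> = d/(c/2)^2 * h0^2" unfolding m0_def using c d by (simp add: field_simps power2_eq_square)
    also have "\<dots> = V" using False unfolding V_def c_def d_def by (simp add: mult.commute add.commute)
    finally show ?thesis using nu(1) by blast
  qed
  show ?thesis
    using P1 P2 strict by (metis less_le_not_le nle_le)
qed

end
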